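(* Let $\tau>0$ and let $F\in C^0(\mathbb{R}\times\mathcal{C},\mathbb{R}^m)$ be weakly nonlinear with Lipschitz constant $K>0$, and assume $K\tau e<1$. Define $\widetilde F:\mathbb{R}\times\mathbb{R}^m\to\mathbb{R}^m$ by $\widetilde F(t,z)=F\big(t,[\bar y(t,z)]_t\big)$. Then $\widetilde F$ is continuous and, for every $(t_0,y_0)\in\mathbb{R}\times\mathbb{R}^m$, the initial value problem $z'(t)=\widetilde F(t,z(t))$, $z(t_0)=y_0$, is uniquely solved by the special solution $\bar y(t_0,y_0)$. Moreover, $\widetilde F$ is globally Lipschitz continuous in its second variable with Lipschitz constant $|\lambda_1|<Ke$, where $\lambda_1$ is the unique solution in $(-\frac1\tau,0)$ of $\lambda=-Ke^{-\lambda\tau}$.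
   Context: $\|\cdot\|_\infty$ is the max-norm on $\mathbb{R}^m$; $\mathcal{C}=C^0([-\tau,0],\mathbb{R}^m)$ with the sup-norm $\|u\|_\infty=\sup_{s\in[-\tau,0]}\|u(s)\|_\infty$; for $y$ defined on $[t-\tau,t]$, $y_t\in\mathcal{C}$, $y_t(s)=y(t+s)$. Consider the DDE $\frac{dy}{dt}=F(t,y_t)$. $F:\mathbb{R}\times\mathcal{C}\to\mathbb{R}^m$ is weakly nonlinear if it is continuous, there is $A\ge0$ with $\|F(t,0)\|_\infty\le A$ for all $t\in\mathbb{R}$, and there is $K>0$ with $\|F(t,u)-F(t,v)\|_\infty\le K\|u-v\|_\infty$ for all $t\in\mathbb{R}$, $u,v\in\mathcal{C}$. A special solution is a solution $\bar y:\mathbb{R}\to\mathbb{R}^m$ of the DDE defined (and satisfying the equation) on all of $\mathbb{R}$ with $\sup_{t\in\mathbb{R}}e^{-|t|/\tau}\|\bar y(t)\|<\infty$. It is known (Driver) that under weak nonlinearity and $K\tau e<1$, for every $(t_0,y_0)\in\mathbb{R}\times\mathbb{R}^m$ there is exactly one special solution with $\bar y(t_0)=y_0$; it is denoted $\bar y(t_0,y_0)$. *)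

theory Defs
  imports "HOL-Analysis.Analysis"
begin

definition maxnorm :: "real ^ 'm \<Rightarrow> real" where
  "maxnorm x = Max (range (\<lambda>i. \<bar>x $ i\<bar>))"

text \<open>Elements of C = C^0([-tau,0], R^m) are represented by functions real => real^'m
  that are continuous on [-tau,0]; only their values on [-tau,0] matter.\<close>
definition in_C :: "real \<Rightarrow> (real \<Rightarrow> real ^ 'm) \<Rightarrow> bool" where
  "in_C \<tau> u \<longleftrightarrow> continuous_on {-\<tau>..0} u"

definition supnorm :: "real \<Rightarrow> (real \<Rightarrow> real ^ 'm) \<Rightarrow> real" where
  "supnorm \<tau> u = (SUP s\<in>{-\<tau>..0}. maxnorm (u s))"

definition seg :: "(real \<Rightarrow> real ^ 'm) \<Rightarrow> real \<Rightarrow> (real \<Rightarrow> real ^ 'm)" where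
  "seg y t = (\<lambda>s. y (t + s))"

definition cont_RC :: "real \<Rightarrow> (real \<Rightarrow> (real \<Rightarrow> real ^ 'm) \<Rightarrow> real ^ 'm) \<Rightarrow> bool" where
  "cont_RC \<tau> F \<longleftrightarrow>
     (\<forall>t u. in_C \<tau> u \<longrightarrow> (\<forall>\<epsilon>>0. \<exists>\<delta>>0. \<forall>t' v. in_C \<tau> v \<and> \<bar>t' - t\<bar> < \<delta> \<and>
        supnorm \<tau> (\<lambda>s. v s - u s) < \<delta> \<longrightarrow> maxnorm (F t' v - F t u) < \<epsilon>))"

definition weakly_nonlinear ::
  "real \<Rightarrow> (real \<Rightarrow> (real \<Rightarrow> real ^ 'm) \<Rightarrow> real ^ 'm) \<Rightarrow> real \<Rightarrow> real \<Rightarrow> bool" where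
  "weakly_nonlinear \<tau> F A K \<longleftrightarrow>
     cont_RC \<tau> F \<and> A \<ge> 0 \<and> K > 0 \<and>
     (\<forall>t. maxnorm (F t (\<lambda>s. 0)) \<le> A) \<and>
     (\<forall>t u v. in_C \<tau> u \<and> in_C \<tau> v \<longrightarrow>
        maxnorm (F t u - F t v) \<le> K * supnorm \<tau> (\<lambda>s. u s - v s))"

definition special_solution ::
  "real \<Rightarrow> (real \<Rightarrow> (real \<Rightarrow> real ^ 'm) \<Rightarrow> real ^ 'm) \<Rightarrow> (real \<Rightarrow> real ^ 'm) \<Rightarrow> bool" where
  "special_solution \<tau> F y \<longleftrightarrow>
     (\<forall>t. (y has_vector_derivative F t (seg y t)) (at t)) \<and>
     (\<exists>B. \<forall>t. exp (- \<bar>t\<bar> / \<tau>) * maxnorm (y t) \<le> B)"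

definition ybar ::
  "real \<Rightarrow> (real \<Rightarrow> (real \<Rightarrow> real ^ 'm) \<Rightarrow> real ^ 'm) \<Rightarrow> real \<Rightarrow> real ^ 'm \<Rightarrow> (real \<Rightarrow> real ^ 'm)" where
  "ybar \<tau> F t0 y0 = (THE y. special_solution \<tau> F y \<and> y t0 = y0)"

definition Ftilde ::
  "real \<Rightarrow> (real \<Rightarrow> (real \<Rightarrow> real ^ 'm) \<Rightarrow> real ^ 'm) \<Rightarrow> real \<Rightarrow> real ^ 'm \<Rightarrow> real ^ 'm" where
  "Ftilde \<tau> F t z = F t (seg (ybar \<tau> F t z) t)"

end

theory Submission
  imports Defs
begin

lemma maxnorm_ge: "\<bar>x $ i\<bar> \<le> maxnorm x"
  unfolding maxnorm_def by (rule Max_ge) auto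

lemma maxnorm_le_iff: "maxnorm x \<le> c \<longleftrightarrow> (\<forall>i. \<bar>x $ i\<bar> \<le> c)"
  unfolding maxnorm_def by (subst Max_le_iff) auto

lemma maxnorm_nonneg: "maxnorm x \<ge> 0"
  by (meson abs_ge_zero maxnorm_ge order_trans)

lemma maxnorm_triangle: "maxnorm (x + y) \<le> maxnorm x + maxnorm y"
  unfolding maxnorm_le_iff
  by (metis abs_triangle_ineq add_mono maxnorm_ge order_trans vector_add_component)

lemma maxnorm_commute: "maxnorm (x - y) = maxnorm (y - x)"
  unfolding maxnorm_def by (metis abs_minus_commute vector_minus_component)

lemma maxnorm_le_norm: "maxnorm x \<le> norm x"
  unfolding maxnorm_le_iff by (simp add: component_le_norm_cart)

lemma norm_le_maxnorm: "norm (x::real^'m) \<le> real CARD('m) * maxnorm x"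
proof -
  have "norm x \<le> (\<Sum>i\<in>UNIV. \<bar>x$i\<bar>)" by (rule norm_le_l1_cart)
  also have "\<dots> \<le> (\<Sum>i\<in>(UNIV::'m set). maxnorm x)" by (rule sum_mono) (rule maxnorm_ge)
  finally show ?thesis by simp
qed

lemma maxnorm_tri3: "maxnorm (x - z) \<le> maxnorm (x - y) + maxnorm (y - z)"
  by (metis diff_add_cancel add_diff_eq maxnorm_triangle diff_diff_eq2 add.commute)

lemma supnorm_le:
  assumes "\<tau> \<ge> 0" "\<And>s. s \<in> {-\<tau>..0} \<Longrightarrow> maxnorm (u s) \<le> c"
  shows "supnorm \<tau> u \<le> c"
  unfolding supnorm_def using assms by (intro cSUP_least) auto

lemma special_cont:
  assumes "special_solution \<tau> F y"
  shows "continuous_on UNIV y"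
proof -
  have "\<forall>t. isCont y t" using assms unfolding special_solution_def
    by (meson has_vector_derivative_continuous)
  thus ?thesis by (simp add: continuous_at_imp_continuous_on)
qed

lemma special_inC:
  assumes "special_solution \<tau> F y"
  shows "in_C \<tau> (seg y t)"
  unfolding in_C_def seg_def
  by (intro continuous_on_compose2[OF special_cont[OF assms]] continuous_intros) auto

lemma special_growth:
  assumes "special_solution \<tau> F y" "\<tau> > 0"
  obtains B where "B \<ge> 0" "\<And>t. maxnorm (y t) \<le> B * exp (\<bar>t\<bar> / \<tau>)"
proof -
  obtain B where B: "\<And>t. exp (- \<bar>t\<bar> / \<tau>) * maxnorm (y t) \<le> B"
    using assms unfolding special_solution_def by auto
  have "B \<ge> 0" using B[of 0] maxnorm_nonneg[of "y 0"] by (smt (verit) exp_gt_zero mult_nonneg_nonneg)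
  moreover have "maxnorm (y t) \<le> B * exp (\<bar>t\<bar> / \<tau>)" for t
  proof -
    have "maxnorm (y t) = exp (\<bar>t\<bar> / \<tau>) * (exp (- \<bar>t\<bar> / \<tau>) * maxnorm (y t))"
      by (simp add: exp_minus field_simps)
    also have "\<dots> \<le> exp (\<bar>t\<bar> / \<tau>) * B" using B[of t] by simp
    finally show ?thesis by (simp add: mult.commute)
  qed
  ultimately show ?thesis using that by blast
qed

lemma lambda_exists:
  fixes \<tau> K :: real
  assumes "\<tau> > 0" "K > 0" "K * \<tau> * exp 1 < 1"
  shows "\<exists>!l. l \<in> {-1/\<tau><..<0} \<and> l = - K * exp (- l * \<tau>)"
proof -
  define h where "h x = K * exp (x * \<tau>) - x" for x
  have ch: "continuous_on {0..1/\<tau>} h" unfolding h_def by (intro continuous_on_diff continuous_on_mult continuous_on_const continuous_on_exp continuous_on_mult_right continuous_on_id)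
  have h0: "h 0 > 0" using assms by (simp add: h_def)
  have h1: "h (1/\<tau>) < 0" using assms by (simp add: h_def field_simps)
  obtain x where x: "x \<in> {0..1/\<tau>}" "h x = 0"
    using IVT2'[of h "1/\<tau>" 0 0] ch h0 h1 assms by force
  have x0: "x \<noteq> 0" "x \<noteq> 1/\<tau>" using x h0 h1 by auto
  have dec: "h b < h a" if "0 \<le> a" "a < b" "b \<le> 1/\<tau>" for a b
  proof -
    have "exp (a*\<tau> - b*\<tau>) \<ge> 1 + (a*\<tau> - b*\<tau>)" by (rule exp_ge_add_one_self)
    hence "exp (a*\<tau>) \<ge> exp (b*\<tau>) * (1 + (a*\<tau> - b*\<tau>))"
      by (simp add: exp_diff field_simps)
    hence e1: "exp (b*\<tau>) - exp (a*\<tau>) \<le> exp (b*\<tau>) * (b - a) * \<tau>" by (simp add: algebra_simps)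
    have "exp (b*\<tau>) \<le> exp 1" using that assms by (simp add: field_simps)
    hence "exp (b*\<tau>) * ((b - a) * \<tau>) \<le> exp 1 * ((b-a)*\<tau>)"
      using that assms by (intro mult_right_mono) auto
    hence "K * (exp (b*\<tau>) - exp (a*\<tau>)) \<le> K * \<tau> * exp 1 * (b - a)"
      using e1 assms by (smt (verit, best) mult.assoc mult.commute mult_left_mono)
    also have "\<dots> < b - a" using assms that by simp
    finally show ?thesis unfolding h_def by (simp add: algebra_simps)
  qed
  show ?thesis
  proof (rule ex1I[of _ "-x"])
    show "-x \<in> {-1/\<tau><..<0} \<and> -x = - K * exp (- (-x) * \<tau>)"
      using x x0 h_def by auto
  next
    fix l assume l: "l \<in> {-1/\<tau><..<0} \<and> l = - K * exp (- l * \<tau>)"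
    hence hl: "h (-l) = 0" "0 < -l" "-l < 1/\<tau>" by (auto simp: h_def)
    show "l = -x"
    proof (rule ccontr)
      assume "l \<noteq> -x"
      hence "-l < x \<or> x < -l" by auto
      thus False using dec[of "-l" x] dec[of x "-l"] hl x by auto
    qed
  qed
qed

lemma comp_deriv:
  assumes "(y has_vector_derivative D) (at t)"
  shows "((\<lambda>t. y t $ i) has_real_derivative D $ i) (at t)"
  unfolding has_real_derivative_iff_has_vector_derivative
  by (rule bounded_linear.has_vector_derivative[OF bounded_linear_vec_nth assms])

lemma key:
  fixes F :: "real \<Rightarrow> (real \<Rightarrow> real ^ 'm) \<Rightarrow> real ^ 'm" and \<tau> K \<mu> h t0 :: real
  assumes tau: "\<tau> > 0" and Kpos: "K > 0"
    and lip: "\<forall>t u v. in_C \<tau> u \<and> in_C \<tau> v \<longrightarrow> maxnorm (F t u - F t v) \<le> K * supnorm \<tau> (\<lambda>s. u s - v s)"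
    and small: "K * \<tau> * exp 1 < 1"
    and mu: "0 < \<mu>" "\<mu> < 1/\<tau>" "\<mu> = K * exp (\<mu> * \<tau>)"
    and s1: "special_solution \<tau> F y1" and s2: "special_solution \<tau> F y2"
    and h: "h \<ge> 0"
  shows "maxnorm (y1 (t0 - h) - y2 (t0 - h)) \<le> exp (\<mu> * h) * maxnorm (y1 t0 - y2 t0)"
proof -
  define d where "d t = y1 t - y2 t" for t
  define D where "D t = F t (seg y1 t) - F t (seg y2 t)" for t
  define f where "f x = maxnorm (d (t0 - x))" for x
  define c where "c = f 0"
  define \<rho> where "\<rho> = 1/\<tau>"
  define q where "q = K * \<tau> * exp 1"
  have q1: "q < 1" and q0: "q > 0" using small tau Kpos by (auto simp: q_def)
  have c0: "c \<ge> 0" by (simp add: c_def f_def maxnorm_nonneg)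
  have mr: "\<mu> \<le> \<rho>" using mu by (simp add: \<rho>_def)
  have rt: "\<rho> * \<tau> = 1" using tau by (simp add: \<rho>_def)
  have derd: "(d has_vector_derivative D t) (at t)" for t
    unfolding d_def D_def
    using s1 s2 unfolding special_solution_def by (auto intro!: has_vector_derivative_diff)
  have Dle: "maxnorm (D t) \<le> K * supnorm \<tau> (\<lambda>s. d (t + s))" for t
    using lip special_inC[OF s1, of t] special_inC[OF s2, of t]
    unfolding D_def d_def seg_def by auto
  obtain B1 where B1: "B1 \<ge> 0" "\<And>t. maxnorm (y1 t) \<le> B1 * exp (\<bar>t\<bar> / \<tau>)"
    using special_growth[OF s1 tau] by blast
  obtain B2 where B2: "B2 \<ge> 0" "\<And>t. maxnorm (y2 t) \<le> B2 * exp (\<bar>t\<bar> / \<tau>)"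
    using special_growth[OF s2 tau] by blast
  define Bd where "Bd = (B1 + B2) * exp (\<bar>t0\<bar> / \<tau>)"
  have Bd0: "Bd \<ge> 0" using B1 B2 by (simp add: Bd_def)
  have fgrow: "f x \<le> Bd * exp (\<rho> * x)" if "x \<ge> 0" for x
  proof -
    have "f x \<le> maxnorm (y1 (t0 - x) - 0) + maxnorm (0 - y2 (t0 - x))"
      unfolding f_def d_def by (rule maxnorm_tri3)
    also have "\<dots> = maxnorm (y1 (t0 - x)) + maxnorm (y2 (t0 - x))"
      using maxnorm_commute[of 0 "y2 (t0 - x)"] by simp
    also have "\<dots> \<le> (B1 + B2) * exp (\<bar>t0 - x\<bar> / \<tau>)"
      using B1(2)[of "t0 - x"] B2(2)[of "t0 - x"] by (simp add: algebra_simps)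
    also have "\<dots> \<le> (B1 + B2) * exp ((\<bar>t0\<bar> + x) / \<tau>)"
      using B1 B2 tau that by (intro mult_left_mono) (auto simp: divide_right_mono)
    also have "\<dots> = Bd * exp (\<rho> * x)"
      by (simp add: Bd_def \<rho>_def add_divide_distrib exp_add)
    finally show ?thesis .
  qed
  have main: "f x * (1 + \<epsilon>) \<le> c * (exp (\<mu> * x) + \<epsilon> * exp (\<rho> * x))"
    if eps: "\<epsilon> > 0" and x0: "x \<ge> 0" for \<epsilon> x
  proof -
    define w where "w x = exp (\<mu> * x) + \<epsilon> * exp (\<rho> * x)" for x
    have wpos: "w x > 0" for x using eps by (simp add: w_def add_pos_pos)
    have wmono: "w a \<le> w b" if "a \<le> b" for a b
      unfolding w_def using that mu eps mr tau
      by (intro add_mono mult_left_mono) (auto simp: \<rho>_def mult_left_mono divide_right_mono)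
    have fw: "f x \<le> (Bd / \<epsilon>) * w x" if "x \<ge> 0" for x
    proof -
      have "f x \<le> (Bd / \<epsilon>) * (\<epsilon> * exp (\<rho> * x))" using fgrow[OF that] eps by simp
      also have "\<dots> \<le> (Bd / \<epsilon>) * w x" using Bd0 eps
        by (intro mult_left_mono) (auto simp: w_def)
      finally show ?thesis .
    qed
    have bdd: "bdd_above ((\<lambda>x. f x / w x) ` {0..})"
      using fw wpos by (intro bdd_aboveI[of _ "Bd / \<epsilon>"]) (auto simp: pos_divide_le_eq)
    define N where "N = (SUP x\<in>{0..}. f x / w x)"
    have fN: "f x \<le> N * w x" if "x \<ge> 0" for x
    proof -
      have "f x / w x \<le> N" unfolding N_def using bdd that by (intro cSUP_upper) auto
      thus ?thesis using wpos[of x] by (simp add: pos_divide_le_eq)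
    qed
    have N1: "N * (1 + \<epsilon>) \<le> c"
    proof (rule ccontr)
      assume nc: "\<not> N * (1 + \<epsilon>) \<le> c"
      hence Npos: "N > 0" using c0 eps by (smt (verit) mult_nonpos_nonneg)
      define g where "g x = c + N * ((exp (\<mu> * x) - 1) + \<epsilon> * q * (exp (\<rho> * x) - 1))" for x
      define g' where "g' x = N * (\<mu> * exp (\<mu> * x) + \<epsilon> * q * \<rho> * exp (\<rho> * x))" for x
      have gder: "(g has_real_derivative g' x) (at x)" for x
        unfolding g_def g'_def by (auto intro!: derivative_eq_intros simp: algebra_simps)
      have g'eq: "g' x = K * N * w (x + \<tau>)" for x
      proof -
        have "\<mu> * exp (\<mu> * x) = K * exp (\<mu> * (x + \<tau>))"
          by (subst mu(3)) (simp add: distrib_left exp_add mult.commute)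
        moreover have "q * \<rho> * exp (\<rho> * x) = K * exp (\<rho> * (x + \<tau>))"
          using rt tau by (simp add: q_def \<rho>_def distrib_left exp_add)
        ultimately show ?thesis unfolding g'_def w_def by (simp add: algebra_simps)
      qed
      have Dg: "maxnorm (D (t0 - x)) \<le> g' x" if "x \<ge> 0" for x
      proof -
        have "supnorm \<tau> (\<lambda>s. d (t0 - x + s)) \<le> N * w (x + \<tau>)"
        proof (rule supnorm_le)
          show "\<tau> \<ge> 0" using tau by simp
          fix s assume s: "s \<in> {-\<tau>..0}"
          have "maxnorm (d (t0 - x + s)) = f (x - s)" by (simp add: f_def algebra_simps)
          also have "\<dots> \<le> N * w (x - s)" using fN s that by auto
          also have "\<dots> \<le> N * w (x + \<tau>)" using Npos wmono s by (intro mult_left_mono) auto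
          finally show "maxnorm (d (t0 - x + s)) \<le> N * w (x + \<tau>)" .
        qed
        hence "maxnorm (D (t0 - x)) \<le> K * (N * w (x + \<tau>))"
          using Dle[of "t0 - x"] Kpos by (smt (verit) mult_left_mono)
        thus ?thesis using g'eq by simp
      qed
      have fg: "f x \<le> g x" if "x \<ge> 0" for x
        unfolding f_def maxnorm_le_iff
      proof
        fix i
        have dci: "((\<lambda>x. d (t0 - x) $ i) has_real_derivative (- D (t0 - x) $ i)) (at x)" for x
        proof -
          have "((\<lambda>x. d (t0 - x) $ i) has_real_derivative (D (t0 - x) $ i) * (-1)) (at x)"
            by (rule DERIV_chain2[where f="\<lambda>t. d t $ i" and g="\<lambda>x. t0 - x"])
               (rule comp_deriv[OF derd], auto intro!: derivative_eq_intros)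
          thus ?thesis by simp
        qed
        have Di: "\<bar>D (t0 - x) $ i\<bar> \<le> g' x" if "x \<ge> 0" for x
          using maxnorm_ge[of "D (t0 - x)" i] Dg[OF that] by simp
        have m1: "(\<lambda>x. d (t0 - x) $ i - d t0 $ i - (g x - c)) x \<le> (\<lambda>x. d (t0 - x) $ i - d t0 $ i - (g x - c)) 0"
          by (rule DERIV_nonpos_imp_nonincreasing[OF that])
             (auto intro!: exI derivative_eq_intros dci gder dest!: Di
                   simp del: minus_diff_eq)
        have m2: "(\<lambda>x. - (d (t0 - x) $ i - d t0 $ i) - (g x - c)) x \<le> (\<lambda>x. - (d (t0 - x) $ i - d t0 $ i) - (g x - c)) 0"
          by (rule DERIV_nonpos_imp_nonincreasing[OF that])
             (auto intro!: exI derivative_eq_intros dci gder dest!: Di)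
        have g0: "g 0 = c" by (simp add: g_def)
        have "\<bar>d t0 $ i\<bar> \<le> c" using maxnorm_ge[of "d t0" i] by (simp add: c_def f_def)
        thus "\<bar>d (t0 - x) $ i\<bar> \<le> g x" using m1 m2 g0 by auto
      qed
      define a where "a = min (N * (1 + \<epsilon>) - c) (N * \<epsilon> * (1 - q))"
      have apos: "a > 0" using nc Npos eps q1 by (simp add: a_def)
      have fa: "f x / w x \<le> N - a / (1 + \<epsilon>)" if "x \<ge> 0" for x
      proof -
        define E where "E = exp (\<rho> * x)"
        have E1: "E \<ge> 1" using that tau by (simp add: E_def \<rho>_def)
        have gx: "g x = N * w x - (N * (1 + \<epsilon>) - c + N * \<epsilon> * (1 - q) * (E - 1))"
          by (simp add: g_def w_def E_def algebra_simps)
        have br: "N * (1 + \<epsilon>) - c + N * \<epsilon> * (1 - q) * (E - 1) \<ge> a * E"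
        proof (cases "N * \<epsilon> * (1 - q) \<le> N * (1 + \<epsilon>) - c")
          case True
          hence "a = N * \<epsilon> * (1 - q)" by (simp add: a_def)
          hence "a * E = N * \<epsilon> * (1 - q) * E" by simp
          moreover have "N * \<epsilon> * (1 - q) * (E - 1) = N * \<epsilon> * (1 - q) * E - N * \<epsilon> * (1 - q)"
            by (simp add: algebra_simps)
          ultimately show ?thesis using True by linarith
        next
          case False
          hence aa: "a = N * (1 + \<epsilon>) - c" by (simp add: a_def)
          have "a * (E - 1) \<le> N * \<epsilon> * (1 - q) * (E - 1)"
            using False E1 aa by (intro mult_right_mono) auto
          moreover have "a * E = a + a * (E - 1)" by (simp add: algebra_simps)
          ultimately show ?thesis using aa by linarith
        qed
        have wE: "w x \<le> (1 + \<epsilon>) * E"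
        proof -
          have "exp (\<mu> * x) \<le> E" using mr that by (simp add: E_def mult_right_mono)
          thus ?thesis by (simp add: w_def E_def algebra_simps)
        qed
        have "a * w x \<le> a * ((1 + \<epsilon>) * E)" using wE apos by (intro mult_left_mono) auto
        hence "a * w x / (1 + \<epsilon>) \<le> a * E" using eps
          by (simp add: divide_le_eq algebra_simps)
        hence "f x \<le> N * w x - a * w x / (1 + \<epsilon>)" using fg[OF that] gx br by linarith
        also have "\<dots> = (N - a / (1 + \<epsilon>)) * w x" by (simp add: algebra_simps)
        finally show ?thesis using wpos[of x] by (simp add: pos_divide_le_eq)
      qed
      have "N \<le> N - a / (1 + \<epsilon>)" unfolding N_def
        using fa by (intro cSUP_least) (auto simp: N_def)
      thus False using apos eps by (simp add: field_simps)
    qed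
    have "f x * (1 + \<epsilon>) \<le> N * w x * (1 + \<epsilon>)" using fN[OF x0] eps by simp
    also have "\<dots> = (N * (1 + \<epsilon>)) * w x" by simp
    also have "\<dots> \<le> c * w x" using N1 wpos[of x] by (intro mult_right_mono) auto
    finally show ?thesis by (simp add: w_def)
  qed
  have "f h \<le> c * exp (\<mu> * h)"
  proof (rule ccontr)
    assume "\<not> f h \<le> c * exp (\<mu> * h)"
    define X where "X = f h - c * exp (\<mu> * h)"
    define Y where "Y = c * exp (\<rho> * h)"
    have X0: "X > 0" using \<open>\<not> _\<close> by (simp add: X_def)
    have Y0: "Y \<ge> 0" using c0 by (simp add: Y_def)
    define \<epsilon> where "\<epsilon> = X / (2 * (Y + 1))"
    have e0: "\<epsilon> > 0" using X0 Y0 by (simp add: \<epsilon>_def)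
    have "f h * (1 + \<epsilon>) \<le> c * exp (\<mu> * h) + \<epsilon> * Y"
      using main[OF e0 h] by (simp add: Y_def algebra_simps)
    hence "X \<le> \<epsilon> * Y - \<epsilon> * f h" by (simp add: X_def algebra_simps)
    also have "\<dots> \<le> \<epsilon> * Y" using e0 by (simp add: f_def maxnorm_nonneg)
    also have "\<dots> < X"
    proof -
      have "0 \<le> X * Y" using X0 Y0 by simp
      hence "0 < X * Y + X * 2" using X0 by linarith
      thus ?thesis using X0 Y0 by (simp add: \<epsilon>_def field_simps)
    qed
    finally show False by simp
  qed
  thus ?thesis by (simp add: f_def c_def d_def mult.commute)
qed

lemma gronwall0:
  fixes d d' :: "real \<Rightarrow> real ^ 'm"
  assumes I: "is_interval I" "t0 \<in> I" and d0: "d t0 = 0"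
    and der: "\<forall>t\<in>I. (d has_vector_derivative d' t) (at t within I)"
    and bd: "\<forall>t\<in>I. maxnorm (d' t) \<le> L * maxnorm (d t)" and L: "L \<ge> 0"
    and t: "t \<in> I"
  shows "d t = 0"
proof -
  define v where "v s = inner (d s) (d s)" for s
  define M where "M = 2 * real CARD('m) * L"
  have M0: "M \<ge> 0" using L by (simp add: M_def)
  have vder: "(v has_real_derivative (2 * inner (d s) (d' s))) (at s within I)" if "s \<in> I" for s
  proof -
    have "(v has_vector_derivative (inner (d s) (d' s) + inner (d' s) (d s))) (at s within I)"
      unfolding v_def
      by (rule bounded_bilinear.has_vector_derivative[OF bounded_bilinear_inner])
         (use der that in auto)
    thus ?thesis unfolding has_real_derivative_iff_has_vector_derivative
      by (simp add: inner_commute)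
  qed
  have vbd: "\<bar>2 * inner (d s) (d' s)\<bar> \<le> M * v s" if "s \<in> I" for s
  proof -
    have "norm (d' s) \<le> real CARD('m) * maxnorm (d' s)" by (rule norm_le_maxnorm)
    also have "\<dots> \<le> real CARD('m) * (L * maxnorm (d s))"
      using bd that by (intro mult_left_mono) auto
    also have "\<dots> \<le> real CARD('m) * (L * norm (d s))"
      using L by (intro mult_left_mono maxnorm_le_norm) auto
    finally have n1: "norm (d' s) \<le> real CARD('m) * L * norm (d s)" by simp
    have "\<bar>inner (d s) (d' s)\<bar> \<le> norm (d s) * norm (d' s)" by (rule Cauchy_Schwarz_ineq2)
    also have "\<dots> \<le> norm (d s) * (real CARD('m) * L * norm (d s))"
      using n1 by (intro mult_left_mono) auto
    finally have "\<bar>inner (d s) (d' s)\<bar> \<le> real CARD('m) * L * (norm (d s))\<^sup>2"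
      by (simp add: power2_eq_square algebra_simps)
    thus ?thesis by (simp add: M_def v_def dot_square_norm algebra_simps)
  qed
  have v0: "v t0 = 0" using d0 by (simp add: v_def)
  have vnn: "v s \<ge> 0" for s by (simp add: v_def)
  have "v t \<le> 0"
  proof (cases "t0 \<le> t")
    case True
    have sub: "{t0..t} \<subseteq> I" using I(1)[unfolded is_interval_1] I(2) t by (metis atLeastAtMost_iff subsetI)
    define \<phi> where "\<phi> s = exp (- M * s) * v s" for s
    define \<phi>' where "\<phi>' s = exp (- M * s) * (- M) * v s + 2 * inner (d s) (d' s) * exp (- M * s)" for s
    have "\<exists>x\<in>{t0..t}. \<phi> t - \<phi> t0 = (\<lambda>h. \<phi>' x * h) (t - t0)"
    proof (rule mvt_very_simple[OF True])
      fix x assume x: "t0 \<le> x" "x \<le> t"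
      hence xI: "x \<in> I" using sub by auto
      have e: "((\<lambda>s. exp (- M * s)) has_real_derivative (exp (- M * x) * (- M))) (at x within I)"
        by (auto intro!: derivative_eq_intros)
      have "(\<phi> has_real_derivative \<phi>' x) (at x within I)"
        unfolding \<phi>_def \<phi>'_def by (rule DERIV_mult[OF e vder[OF xI]])
      hence "(\<phi> has_real_derivative \<phi>' x) (at x within {t0..t})"
        using sub by (rule DERIV_subset)
      thus "(\<phi> has_derivative (\<lambda>h. \<phi>' x * h)) (at x within {t0..t})"
        by (simp add: has_field_derivative_def)
    qed
    then obtain x where x: "x \<in> {t0..t}" "\<phi> t - \<phi> t0 = \<phi>' x * (t - t0)" by auto
    have "\<phi>' x \<le> 0"
    proof -
      have "2 * inner (d x) (d' x) \<le> M * v x" using vbd[of x] x sub by auto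
      hence "exp (- M * x) * (2 * inner (d x) (d' x)) \<le> exp (- M * x) * (M * v x)" by simp
      thus ?thesis by (simp add: \<phi>'_def algebra_simps)
    qed
    hence "\<phi>' x * (t - t0) \<le> 0" using True by (intro mult_nonpos_nonneg) auto
    hence "\<phi> t \<le> \<phi> t0" using x by linarith
    hence "exp (- M * t) * v t \<le> 0" using v0 by (simp add: \<phi>_def)
    thus ?thesis by (simp add: mult_le_0_iff)
  next
    case False
    hence tt: "t \<le> t0" by simp
    have sub: "{t..t0} \<subseteq> I" using I(1)[unfolded is_interval_1] I(2) t by (metis atLeastAtMost_iff subsetI)
    define \<phi> where "\<phi> s = exp (M * s) * v s" for s
    define \<phi>' where "\<phi>' s = exp (M * s) * M * v s + 2 * inner (d s) (d' s) * exp (M * s)" for s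
    have "\<exists>x\<in>{t..t0}. \<phi> t0 - \<phi> t = (\<lambda>h. \<phi>' x * h) (t0 - t)"
    proof (rule mvt_very_simple[OF tt])
      fix x assume x: "t \<le> x" "x \<le> t0"
      hence xI: "x \<in> I" using sub by auto
      have e: "((\<lambda>s. exp (M * s)) has_real_derivative (exp (M * x) * M)) (at x within I)"
        by (auto intro!: derivative_eq_intros)
      have "(\<phi> has_real_derivative \<phi>' x) (at x within I)"
        unfolding \<phi>_def \<phi>'_def by (rule DERIV_mult[OF e vder[OF xI]])
      hence "(\<phi> has_real_derivative \<phi>' x) (at x within {t..t0})"
        using sub by (rule DERIV_subset)
      thus "(\<phi> has_derivative (\<lambda>h. \<phi>' x * h)) (at x within {t..t0})"
        by (simp add: has_field_derivative_def)
    qed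
    then obtain x where x: "x \<in> {t..t0}" "\<phi> t0 - \<phi> t = \<phi>' x * (t0 - t)" by auto
    have "\<phi>' x \<ge> 0"
    proof -
      have "- (M * v x) \<le> 2 * inner (d x) (d' x)" using vbd[of x] x sub by auto
      hence "exp (M * x) * (- (M * v x)) \<le> exp (M * x) * (2 * inner (d x) (d' x))"
        by (intro mult_left_mono) auto
      thus ?thesis by (simp add: \<phi>'_def algebra_simps)
    qed
    hence "\<phi>' x * (t0 - t) \<ge> 0" using tt by (intro mult_nonneg_nonneg) auto
    hence "\<phi> t \<le> \<phi> t0" using x by linarith
    hence "exp (M * t) * v t \<le> 0" using v0 by (simp add: \<phi>_def)
    thus ?thesis by (simp add: mult_le_0_iff)
  qed
  hence "v t = 0" using vnn[of t] by simp
  thus ?thesis by (simp add: v_def)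
qed

lemma exp_aux: "0 \<le> (\<mu>::real) \<Longrightarrow> -\<tau> \<le> s \<Longrightarrow> exp (\<mu> * (-s)) \<le> exp (\<mu> * \<tau>)"
proof -
  assume "0 \<le> \<mu>" "-\<tau> \<le> s"
  hence "\<mu> * (-s) \<le> \<mu> * \<tau>" by (intro mult_left_mono) auto
  thus ?thesis by simp
qed

lemma ybar_props:
  assumes driver: "\<forall>t0 y0. \<exists>!y. special_solution \<tau> F y \<and> y t0 = y0"
  shows "special_solution \<tau> F (ybar \<tau> F t0 y0)" "ybar \<tau> F t0 y0 t0 = y0"
  using theI'[OF driver[rule_format, of t0 y0]] unfolding ybar_def by auto

lemma ybar_unique:
  assumes driver: "\<forall>t0 y0. \<exists>!y. special_solution \<tau> F y \<and> y t0 = y0"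
    and "special_solution \<tau> F y"
  shows "ybar \<tau> F t0 (y t0) = y"
  unfolding ybar_def using assms by (intro the1_equality) auto

lemma Ftilde_lip:
  fixes F :: "real \<Rightarrow> (real \<Rightarrow> real ^ 'm) \<Rightarrow> real ^ 'm" and \<tau> K \<mu> :: real
  assumes tau: "\<tau> > 0" and Kpos: "K > 0"
    and lip: "\<forall>t u v. in_C \<tau> u \<and> in_C \<tau> v \<longrightarrow> maxnorm (F t u - F t v) \<le> K * supnorm \<tau> (\<lambda>s. u s - v s)"
    and small: "K * \<tau> * exp 1 < 1"
    and mu: "0 < \<mu>" "\<mu> < 1/\<tau>" "\<mu> = K * exp (\<mu> * \<tau>)"
    and driver: "\<forall>t0 y0. \<exists>!y. special_solution \<tau> F y \<and> y t0 = y0"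
  shows "maxnorm (Ftilde \<tau> F t z - Ftilde \<tau> F t w) \<le> \<mu> * maxnorm (z - w)"
proof -
  define y1 where "y1 = ybar \<tau> F t z"
  define y2 where "y2 = ybar \<tau> F t w"
  have s1: "special_solution \<tau> F y1" "y1 t = z" using ybar_props[OF driver] by (auto simp: y1_def)
  have s2: "special_solution \<tau> F y2" "y2 t = w" using ybar_props[OF driver] by (auto simp: y2_def)
  have "supnorm \<tau> (\<lambda>s. seg y1 t s - seg y2 t s) \<le> exp (\<mu> * \<tau>) * maxnorm (z - w)"
  proof (rule supnorm_le)
    show "\<tau> \<ge> 0" using tau by simp
    fix s assume s: "s \<in> {-\<tau>..0}"
    have "maxnorm (y1 (t - (-s)) - y2 (t - (-s))) \<le> exp (\<mu> * (-s)) * maxnorm (y1 t - y2 t)"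
      using s by (intro key[OF tau Kpos lip small mu s1(1) s2(1)]) auto
    also have "\<dots> \<le> exp (\<mu> * \<tau>) * maxnorm (z - w)"
    proof -
      have "exp (\<mu> * (-s)) \<le> exp (\<mu> * \<tau>)" using s mu by (intro exp_aux) auto
      thus ?thesis using s1(2) s2(2) by (simp add: mult_right_mono maxnorm_nonneg)
    qed
    finally show "maxnorm (seg y1 t s - seg y2 t s) \<le> exp (\<mu> * \<tau>) * maxnorm (z - w)"
      by (simp add: seg_def)
  qed
  hence "K * supnorm \<tau> (\<lambda>s. seg y1 t s - seg y2 t s) \<le> K * (exp (\<mu> * \<tau>) * maxnorm (z - w))"
    using Kpos by (intro mult_left_mono) auto
  moreover have "maxnorm (Ftilde \<tau> F t z - Ftilde \<tau> F t w) \<le> K * supnorm \<tau> (\<lambda>s. seg y1 t s - seg y2 t s)"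
    using lip special_inC[OF s1(1)] special_inC[OF s2(1)] unfolding Ftilde_def y1_def y2_def by auto
  moreover have "K * (exp (\<mu> * \<tau>) * maxnorm (z - w)) = \<mu> * maxnorm (z - w)"
    by (metis mu(3) mult.assoc)
  ultimately show ?thesis by linarith
qed

lemma Ftilde_cont:
  fixes F :: "real \<Rightarrow> (real \<Rightarrow> real ^ 'm) \<Rightarrow> real ^ 'm" and \<tau> K \<mu> :: real
  assumes tau: "\<tau> > 0" and Kpos: "K > 0"
    and lip: "\<forall>t u v. in_C \<tau> u \<and> in_C \<tau> v \<longrightarrow> maxnorm (F t u - F t v) \<le> K * supnorm \<tau> (\<lambda>s. u s - v s)"
    and small: "K * \<tau> * exp 1 < 1"
    and mu: "0 < \<mu>" "\<mu> < 1/\<tau>" "\<mu> = K * exp (\<mu> * \<tau>)"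
    and driver: "\<forall>t0 y0. \<exists>!y. special_solution \<tau> F y \<and> y t0 = y0"
    and cont: "cont_RC \<tau> F"
  shows "continuous_on UNIV (\<lambda>(t, z). Ftilde \<tau> F t z)"
  unfolding continuous_on_iff
proof (intro ballI allI impI)
  fix p :: "real \<times> (real ^ 'm)" and e :: real
  assume e: "e > 0"
  obtain t z where p: "p = (t, z)" by (cases p)
  define Y where "Y = ybar \<tau> F t z"
  have sY: "special_solution \<tau> F Y" "Y t = z" using ybar_props[OF driver] by (auto simp: Y_def)
  define u where "u = seg Y t"
  have uC: "in_C \<tau> u" using special_inC[OF sY(1)] by (simp add: u_def)
  define C where "C = real CARD('m)"
  have C1: "C \<ge> 1" by (simp add: C_def)
  obtain \<delta>1 where d1: "\<delta>1 > 0" and d1P: "\<And>t' v. in_C \<tau> v \<Longrightarrow> \<bar>t' - t\<bar> < \<delta>1 \<Longrightarrow>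
      supnorm \<tau> (\<lambda>s. v s - u s) < \<delta>1 \<Longrightarrow> maxnorm (F t' v - F t u) < e / C"
  proof -
    have ec: "e / C > 0" using e C1 by simp
    have "\<forall>\<epsilon>>0. \<exists>\<delta>>0. \<forall>t' v. in_C \<tau> v \<and> \<bar>t' - t\<bar> < \<delta> \<and>
        supnorm \<tau> (\<lambda>s. v s - u s) < \<delta> \<longrightarrow> maxnorm (F t' v - F t u) < \<epsilon>"
      using cont uC unfolding cont_RC_def by blast
    from this[rule_format, OF ec] show ?thesis using that by blast
  qed
  define E where "E = exp (\<mu> * \<tau>)"
  have E1: "E \<ge> 1" using mu tau by (simp add: E_def)
  define S where "S = {t - \<tau> - 1 .. t + 1}"
  have uc: "uniformly_continuous_on S Y"
    by (rule compact_uniformly_continuous) (use special_cont[OF sY(1)] continuous_on_subset in \<open>auto simp: S_def\<close>)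
  define \<eta> where "\<eta> = \<delta>1 / (4 * E)"
  have eta: "\<eta> > 0" "\<eta> \<le> \<delta>1 / 4" using d1 E1 by (auto simp: \<eta>_def field_simps)
  obtain \<delta>2 where d2: "\<delta>2 > 0" and d2P: "\<And>a b. a \<in> S \<Longrightarrow> b \<in> S \<Longrightarrow> dist a b < \<delta>2 \<Longrightarrow> dist (Y a) (Y b) < \<eta>"
  proof -
    from uc[unfolded uniformly_continuous_on_def, rule_format, OF eta(1)]
    show ?thesis using that by blast
  qed
  define \<delta> where "\<delta> = min (min \<delta>1 \<delta>2) (min 1 \<eta>)"
  have dpos: "\<delta> > 0" using d1 d2 eta by (simp add: \<delta>_def)
  show "\<exists>\<delta>>0. \<forall>p'\<in>UNIV. dist p' p < \<delta> \<longrightarrow> dist ((\<lambda>(t, z). Ftilde \<tau> F t z) p') ((\<lambda>(t, z). Ftilde \<tau> F t z) p) < e"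
  proof (intro exI[of _ \<delta>] conjI ballI impI dpos)
    fix p' :: "real \<times> (real ^ 'm)" assume dp: "dist p' p < \<delta>"
    obtain t' z' where p': "p' = (t', z')" by (cases p')
    have tt: "\<bar>t' - t\<bar> < \<delta>" using dist_fst_le[of p' p] dp by (simp add: p p' dist_real_def)
    have zz: "norm (z' - z) < \<delta>" using dist_snd_le[of p' p] dp by (simp add: p p' dist_norm)
    define Y' where "Y' = ybar \<tau> F t' z'"
    have sY': "special_solution \<tau> F Y'" "Y' t' = z'" using ybar_props[OF driver] by (auto simp: Y'_def)
    define v where "v = seg Y' t'"
    have vC: "in_C \<tau> v" using special_inC[OF sY'(1)] by (simp add: v_def)
    have tS: "t + s \<in> S" "t' + s \<in> S" if "s \<in> {-\<tau>..0}" for s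
      using that tt by (auto simp: S_def \<delta>_def)
    have Ydiff: "maxnorm (Y (t' + s) - Y (t + s)) < \<eta>" if "s \<in> {-\<tau>..0}" for s
    proof -
      have "dist (t' + s) (t + s) < \<delta>2" using tt by (simp add: dist_real_def \<delta>_def)
      hence "dist (Y (t' + s)) (Y (t + s)) < \<eta>" using d2P tS[OF that] by blast
      thus ?thesis using maxnorm_le_norm[of "Y (t' + s) - Y (t + s)"] by (simp add: dist_norm)
    qed
    have z0: "0 \<in> {-\<tau>..0}" using tau by simp
    have "maxnorm (z' - Y t') \<le> maxnorm (z' - z) + maxnorm (z - Y t')" by (rule maxnorm_tri3)
    also have "\<dots> < \<eta> + \<eta>"
    proof (rule add_strict_mono)
      show "maxnorm (z' - z) < \<eta>" using maxnorm_le_norm[of "z' - z"] zz by (simp add: \<delta>_def)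
      show "maxnorm (z - Y t') < \<eta>" using Ydiff[OF z0] sY(2) maxnorm_commute[of z "Y t'"] by simp
    qed
    finally have zY: "maxnorm (z' - Y t') < 2 * \<eta>" by simp
    have "supnorm \<tau> (\<lambda>s. v s - u s) \<le> E * (2 * \<eta>) + \<eta>"
    proof (rule supnorm_le)
      show "\<tau> \<ge> 0" using tau by simp
      fix s assume s: "s \<in> {-\<tau>..0}"
      have "maxnorm (Y' (t' + s) - Y (t + s)) \<le> maxnorm (Y' (t' + s) - Y (t' + s)) + maxnorm (Y (t' + s) - Y (t + s))"
        by (rule maxnorm_tri3)
      also have "maxnorm (Y' (t' + s) - Y (t' + s)) \<le> exp (\<mu> * (-s)) * maxnorm (Y' t' - Y t')"
        using key[OF tau Kpos lip small mu sY'(1) sY(1), of "-s" t'] s by simp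
      also have "\<dots> \<le> E * (2 * \<eta>)"
        using s mu zY sY' exp_aux[of \<mu> \<tau> s] by (intro mult_mono) (auto simp: E_def maxnorm_nonneg)
      finally show "maxnorm (v s - u s) \<le> E * (2 * \<eta>) + \<eta>"
        using Ydiff[OF s] by (simp add: v_def u_def seg_def)
    qed
    also have "\<dots> < \<delta>1" using d1 E1 by (simp add: \<eta>_def field_simps)
    finally have sn: "supnorm \<tau> (\<lambda>s. v s - u s) < \<delta>1" .
    have "maxnorm (F t' v - F t u) < e / C"
      using d1P[OF vC _ sn] tt by (simp add: \<delta>_def)
    hence "C * maxnorm (F t' v - F t u) < e" using C1 by (simp add: field_simps)
    moreover have "norm (F t' v - F t u) \<le> C * maxnorm (F t' v - F t u)"
      unfolding C_def by (rule norm_le_maxnorm)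
    ultimately have "norm (F t' v - F t u) < e" by linarith
    thus "dist ((\<lambda>(t, z). Ftilde \<tau> F t z) p') ((\<lambda>(t, z). Ftilde \<tau> F t z) p) < e"
      by (simp add: p p' Ftilde_def dist_norm v_def u_def Y_def Y'_def)
  qed
qed

theorem mainTheorem6:
  fixes F :: "real \<Rightarrow> (real \<Rightarrow> real ^ 'm) \<Rightarrow> real ^ 'm"
    and \<tau> A K :: real
  assumes tau_pos: "\<tau> > 0"
    and wnl: "weakly_nonlinear \<tau> F A K"
    and small: "K * \<tau> * exp 1 < 1"
    and driver: "\<forall>t0 y0. \<exists>!y. special_solution \<tau> F y \<and> y t0 = y0"
  shows "continuous_on UNIV (\<lambda>(t, z). Ftilde \<tau> F t z)
    \<and> (\<forall>t0 y0.
         (\<forall>t. (ybar \<tau> F t0 y0 has_vector_derivative Ftilde \<tau> F t (ybar \<tau> F t0 y0 t)) (at t))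
         \<and> ybar \<tau> F t0 y0 t0 = y0
         \<and> (\<forall>I z. is_interval I \<and> t0 \<in> I \<and> z t0 = y0 \<and>
               (\<forall>t\<in>I. (z has_vector_derivative Ftilde \<tau> F t (z t)) (at t within I))
               \<longrightarrow> (\<forall>t\<in>I. z t = ybar \<tau> F t0 y0 t)))
    \<and> (\<exists>!l. l \<in> {-1/\<tau><..<0} \<and> l = - K * exp (- l * \<tau>))
    \<and> (\<forall>l. l \<in> {-1/\<tau><..<0} \<and> l = - K * exp (- l * \<tau>) \<longrightarrow>
         \<bar>l\<bar> < K * exp 1 \<and>
         (\<forall>t z w. maxnorm (Ftilde \<tau> F t z - Ftilde \<tau> F t w) \<le> \<bar>l\<bar> * maxnorm (z - w)))"
proof -
  have cRC: "cont_RC \<tau> F" and Kpos: "K > 0"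
    and lip: "\<forall>t u v. in_C \<tau> u \<and> in_C \<tau> v \<longrightarrow> maxnorm (F t u - F t v) \<le> K * supnorm \<tau> (\<lambda>s. u s - v s)"
    using wnl unfolding weakly_nonlinear_def by auto
  have ex: "\<exists>!l. l \<in> {-1/\<tau><..<0} \<and> l = - K * exp (- l * \<tau>)"
    by (rule lambda_exists[OF tau_pos Kpos small])
  then obtain l0 where l0: "l0 \<in> {-1/\<tau><..<0}" "l0 = - K * exp (- l0 * \<tau>)" by auto
  define \<mu> where "\<mu> = - l0"
  have mu: "0 < \<mu>" "\<mu> < 1/\<tau>" "\<mu> = K * exp (\<mu> * \<tau>)" using l0 by (auto simp: \<mu>_def)
  have lipF: "\<And>t z w. maxnorm (Ftilde \<tau> F t z - Ftilde \<tau> F t w) \<le> \<mu> * maxnorm (z - w)"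
    by (rule Ftilde_lip[OF tau_pos Kpos lip small mu driver])
  have C: "continuous_on UNIV (\<lambda>(t, z). Ftilde \<tau> F t z)"
    by (rule Ftilde_cont[OF tau_pos Kpos lip small mu driver cRC])
  have P2: "\<forall>t0 y0.
         (\<forall>t. (ybar \<tau> F t0 y0 has_vector_derivative Ftilde \<tau> F t (ybar \<tau> F t0 y0 t)) (at t))
         \<and> ybar \<tau> F t0 y0 t0 = y0
         \<and> (\<forall>I z. is_interval I \<and> t0 \<in> I \<and> z t0 = y0 \<and>
               (\<forall>t\<in>I. (z has_vector_derivative Ftilde \<tau> F t (z t)) (at t within I))
               \<longrightarrow> (\<forall>t\<in>I. z t = ybar \<tau> F t0 y0 t))"
  proof (rule allI, rule allI, intro conjI)
    fix t0 y0
    define Y where "Y = ybar \<tau> F t0 y0"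
    have sY: "special_solution \<tau> F Y" "Y t0 = y0" using ybar_props[OF driver] by (auto simp: Y_def)
    have FY: "Ftilde \<tau> F t (Y t) = F t (seg Y t)" for t
      unfolding Ftilde_def using ybar_unique[OF driver sY(1)] by simp
    have dY: "(Y has_vector_derivative Ftilde \<tau> F t (Y t)) (at t)" for t
      using sY(1) FY unfolding special_solution_def by simp
    show "\<forall>t. (ybar \<tau> F t0 y0 has_vector_derivative Ftilde \<tau> F t (ybar \<tau> F t0 y0 t)) (at t)"
      using dY by (simp add: Y_def)
    show "ybar \<tau> F t0 y0 t0 = y0" using sY by (simp add: Y_def)
    show "\<forall>I z. is_interval I \<and> t0 \<in> I \<and> z t0 = y0 \<and>
               (\<forall>t\<in>I. (z has_vector_derivative Ftilde \<tau> F t (z t)) (at t within I))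
               \<longrightarrow> (\<forall>t\<in>I. z t = ybar \<tau> F t0 y0 t)"
    proof (intro allI impI ballI)
      fix I z t
      assume H: "is_interval I \<and> t0 \<in> I \<and> z t0 = y0 \<and>
               (\<forall>t\<in>I. (z has_vector_derivative Ftilde \<tau> F t (z t)) (at t within I))"
        and t: "t \<in> I"
      have i1: "is_interval I" "t0 \<in> I" using H by auto
      have i2: "z t0 - Y t0 = 0" using H sY by simp
      have i3: "\<forall>s\<in>I. ((\<lambda>s. z s - Y s) has_vector_derivative Ftilde \<tau> F s (z s) - Ftilde \<tau> F s (Y s)) (at s within I)"
      proof
        fix s assume s: "s \<in> I"
        have "(z has_vector_derivative Ftilde \<tau> F s (z s)) (at s within I)" using H s by blast
        moreover have "(Y has_vector_derivative Ftilde \<tau> F s (Y s)) (at s within I)"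
          by (rule has_vector_derivative_at_within[OF dY])
        ultimately show "((\<lambda>s. z s - Y s) has_vector_derivative Ftilde \<tau> F s (z s) - Ftilde \<tau> F s (Y s)) (at s within I)"
          by (rule has_vector_derivative_diff)
      qed
      have i4: "\<forall>s\<in>I. maxnorm (Ftilde \<tau> F s (z s) - Ftilde \<tau> F s (Y s)) \<le> \<mu> * maxnorm (z s - Y s)"
        using lipF by blast
      have i5: "\<mu> \<ge> 0" using mu by simp
      note g = gronwall0[where d' = "\<lambda>s. Ftilde \<tau> F s (z s) - Ftilde \<tau> F s (Y s)" and L = \<mu> and I = I and d = "\<lambda>s. z s - Y s", OF i1 i2 i3 i4 i5 t]
      have "z t - Y t = 0" using g by simp
      thus "z t = ybar \<tau> F t0 y0 t" by (simp add: Y_def)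
    qed
  qed
  have P4: "\<forall>l. l \<in> {-1/\<tau><..<0} \<and> l = - K * exp (- l * \<tau>) \<longrightarrow>
         \<bar>l\<bar> < K * exp 1 \<and>
         (\<forall>t z w. maxnorm (Ftilde \<tau> F t z - Ftilde \<tau> F t w) \<le> \<bar>l\<bar> * maxnorm (z - w))"
  proof (rule allI, rule impI, rule conjI)
    fix l assume l: "l \<in> {-1/\<tau><..<0} \<and> l = - K * exp (- l * \<tau>)"
    define m where "m = - l"
    have m: "0 < m" "m < 1/\<tau>" "m = K * exp (m * \<tau>)" using l by (auto simp: m_def)
    have al: "\<bar>l\<bar> = m" using l by (auto simp: m_def)
    have "m * \<tau> < 1" using m tau_pos by (simp add: field_simps)
    hence "exp (m * \<tau>) < exp 1" by simp
    hence "K * exp (m * \<tau>) < K * exp 1" using Kpos by simp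
    thus "\<bar>l\<bar> < K * exp 1" using al m(3) by linarith
    show "\<forall>t z w. maxnorm (Ftilde \<tau> F t z - Ftilde \<tau> F t w) \<le> \<bar>l\<bar> * maxnorm (z - w)"
      using Ftilde_lip[OF tau_pos Kpos lip small m driver] al by auto
  qed
  show ?thesis by (rule conjI[OF C conjI[OF P2 conjI[OF ex P4]]])
qed

end
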